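(* Let $d\ge1$ and let $X_1,\dots,X_d$ be random variables with $X_i\sim\mathrm{Bernoulli}(p_i)$ satisfying $\mathbb{E}[X_iX_j]\le p_ip_j$ for all $i\neq j$. Let $\tilde X_1,\dots,\tilde X_d$ be mutually independent with $\tilde X_i$ equal in distribution to $X_i$, and set $Z=\sum_{i=1}^dX_i$, $\tilde Z=\sum_{i=1}^d\tilde X_i$. Then $\mathbb{P}(Z>0)\ge\frac12\mathbb{P}(\tilde Z>0)$. *)

theory Defs
  imports "HOL-Probability.Probability"
begin

definition bernoulli_rv :: "'a measure \<Rightarrow> ('a \<Rightarrow> real) \<Rightarrow> real \<Rightarrow> bool" where
  "bernoulli_rv M X p \<longleftrightarrow> X \<in> borel_measurable M \<and> (AE x in M. X x \<in> {0, 1})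
     \<and> measure M {x \<in> space M. X x = 1} = p"

end

theory Submission
  imports Defs
begin

lemma lower_part:
  fixes M :: "'a measure" and X :: "nat \<Rightarrow> 'a \<Rightarrow> real" and p :: "nat \<Rightarrow> real" and d :: nat
  assumes PM: "prob_space M"
    and bern: "\<And>i. i \<in> {1..d} \<Longrightarrow> bernoulli_rv M (X i) (p i)"
    and corr: "\<And>i j. i \<in> {1..d} \<Longrightarrow> j \<in> {1..d} \<Longrightarrow> i \<noteq> j \<Longrightarrow>
                 prob_space.expectation M (\<lambda>x. X i x * X j x) \<le> p i * p j"
  shows "measure M {x \<in> space M. (\<Sum>i=1..d. X i x) > 0} \<ge> (\<Sum>i=1..d. p i) / (1 + (\<Sum>i=1..d. p i))"
proof -
  interpret prob_space M by (rule PM)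
  define I where "I = {1..d}"
  define B where "B i = {x\<in>space M. X i x = 1}" for i
  define S where "S = (\<Sum>i\<in>I. p i)"
  define Z where "Z x = (\<Sum>i\<in>I. X i x)" for x
  have meas: "X i \<in> borel_measurable M" if "i \<in> I" for i using bern[of i] that by (auto simp: bernoulli_rv_def I_def)
  have Bs: "B i \<in> sets M" if "i \<in> I" for i unfolding B_def using meas[OF that] by measurable
  have pB: "p i = measure M (B i)" if "i \<in> I" for i using bern[of i] that by (auto simp: bernoulli_rv_def I_def B_def)
  have p0: "p i \<ge> 0" if "i \<in> I" for i using pB[OF that] by simp
  have AEi: "AE x in M. X i x = indicator (B i) x" if "i \<in> I" for i
  proof -
    have "AE x in M. X i x \<in> {0, 1}" using bern[of i] that by (auto simp: bernoulli_rv_def I_def)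
    moreover have "AE x in M. x \<in> space M" by simp
    ultimately show ?thesis by eventually_elim (auto simp: B_def indicator_def)
  qed
  have intX: "integrable M (X i)" if "i \<in> I" for i
    using integrable_cong_AE[OF meas[OF that] _ AEi[OF that]] Bs[OF that] by (simp add: less_top[symmetric])
  have EX: "expectation (X i) = p i" if "i \<in> I" for i
    using integral_cong_AE[OF meas[OF that] _ AEi[OF that]] Bs[OF that] pB[OF that]
    by (simp add: Int_absorb2 sets.sets_into_space)
  have AEij: "AE x in M. X i x * X j x = indicator (B i \<inter> B j) x" if "i \<in> I" "j \<in> I" for i j
    using AEi[OF that(1)] AEi[OF that(2)] by eventually_elim (auto simp: indicator_def)
  have mij: "(\<lambda>x. X i x * X j x) \<in> borel_measurable M" if "i \<in> I" "j \<in> I" for i j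
    using meas[OF that(1)] meas[OF that(2)] by measurable
  have intXX: "integrable M (\<lambda>x. X i x * X j x)" if "i \<in> I" "j \<in> I" for i j
    using integrable_cong_AE[OF mij[OF that] _ AEij[OF that]] Bs[OF that(1)] Bs[OF that(2)] by (auto simp: less_top[symmetric])
  have EXX: "expectation (\<lambda>x. X i x * X j x) \<le> (if i = j then p i else 0) + p i * p j"
    if "i \<in> I" "j \<in> I" for i j
  proof (cases "i = j")
    case True
    have "expectation (\<lambda>x. X i x * X j x) = measure M (B i \<inter> B j)"
      using integral_cong_AE[OF mij[OF that] _ AEij[OF that]] Bs[OF that(1)] Bs[OF that(2)]
      by (simp add: Int_absorb2 sets.sets_into_space)
    also have "\<dots> = p i" using True pB that by simp
    finally show ?thesis using True p0 that by simp
  next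
    case False
    then show ?thesis using corr[of i j] that by (simp add: I_def)
  qed
  have finI: "finite I" by (simp add: I_def)
  have intZ: "integrable M Z" unfolding Z_def using intX by (intro Bochner_Integration.integrable_sum) auto
  have EZ: "expectation Z = S" unfolding Z_def S_def
    using EX intX by (subst Bochner_Integration.integral_sum) auto
  have Z2: "(Z x)^2 = (\<Sum>i\<in>I. \<Sum>j\<in>I. X i x * X j x)" for x
    unfolding Z_def power2_eq_square sum_product ..
  have intZ2: "integrable M (\<lambda>x. (Z x)^2)" unfolding Z2
    using intXX by (intro Bochner_Integration.integrable_sum) auto
  have "expectation (\<lambda>x. (Z x)^2) = (\<Sum>i\<in>I. \<Sum>j\<in>I. expectation (\<lambda>x. X i x * X j x))"
    unfolding Z2 using intXX by (simp add: integrable_sum)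
  also have "\<dots> \<le> (\<Sum>i\<in>I. \<Sum>j\<in>I. (if i = j then p i else 0) + p i * p j)"
    using EXX by (intro sum_mono) auto
  also have "\<dots> = S + S * S"
    using finI by (simp add: sum.distrib S_def sum_product)
  finally have EZ2: "expectation (\<lambda>x. (Z x)^2) \<le> S + S * S" .
  have S0: "S \<ge> 0" unfolding S_def using p0 by (simp add: sum_nonneg)
  define t where "t = 1 / (1 + S)"
  have t0: "t \<ge> 0" using S0 by (simp add: t_def)
  define A where "A = {x \<in> space M. Z x > 0}"
  have As: "A \<in> sets M" unfolding A_def Z_def using meas by measurable
  have pw: "2 * t * Z x - t^2 * (Z x)^2 \<le> indicator A x" if "x \<in> space M" for x
  proof (cases "Z x > 0")
    case True
    have "2 * t * Z x - t^2 * (Z x)^2 = 1 - (1 - t * Z x)^2" by (simp add: power2_eq_square algebra_simps)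
    also have "\<dots> \<le> 1" by simp
    finally show ?thesis using True that by (simp add: A_def)
  next
    case False
    have "2 * t * Z x \<le> 0" using False t0 by (simp add: mult_nonneg_nonpos)
    moreover have "t^2 * (Z x)^2 \<ge> 0" by simp
    ultimately have "2 * t * Z x - t^2 * (Z x)^2 \<le> 0" by linarith
    then show ?thesis using False by (simp add: A_def indicator_def)
  qed
  have "2 * t * S - t^2 * (S + S * S) \<le> 2 * t * S - t^2 * expectation (\<lambda>x. (Z x)^2)"
    using EZ2 t0 by (simp add: mult_left_mono)
  also have "\<dots> = expectation (\<lambda>x. 2 * t * Z x - t^2 * (Z x)^2)"
    using intZ intZ2 EZ by simp
  also have "\<dots> \<le> expectation (indicator A)"
    using pw intZ intZ2 As by (intro integral_mono) (auto simp: less_top[symmetric])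
  also have "\<dots> = measure M A" using As by (simp add: Int_absorb2 sets.sets_into_space)
  finally have "2 * t * S - t^2 * (S + S * S) \<le> measure M A" .
  moreover have "2 * t * S - t^2 * (S + S * S) = S / (1 + S)"
  proof -
    have ne: "1 + S \<noteq> 0" using S0 by linarith
    have "t^2 * (S + S * S) = (S * (1 + S)) / ((1 + S) * (1 + S))"
      by (simp add: t_def power2_eq_square algebra_simps)
    also have "\<dots> = S / (1 + S)" using ne by simp
    finally have "t^2 * (S + S * S) = S / (1 + S)" .
    moreover have "2 * t * S = 2 * S / (1 + S)" by (simp add: t_def)
    ultimately show ?thesis by (simp add: diff_divide_distrib[symmetric])
  qed
  ultimately show ?thesis by (simp add: A_def Z_def S_def I_def)
qed


theorem corollary11:
  fixes M :: "'a measure" and N :: "'b measure"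
    and X :: "nat \<Rightarrow> 'a \<Rightarrow> real" and Y :: "nat \<Rightarrow> 'b \<Rightarrow> real"
    and p :: "nat \<Rightarrow> real" and d :: nat
  assumes "prob_space M" and "prob_space N" and "d \<ge> 1"
    and bern: "\<And>i. i \<in> {1..d} \<Longrightarrow> bernoulli_rv M (X i) (p i)"
    and corr: "\<And>i j. i \<in> {1..d} \<Longrightarrow> j \<in> {1..d} \<Longrightarrow> i \<noteq> j \<Longrightarrow>
                 prob_space.expectation M (\<lambda>x. X i x * X j x) \<le> p i * p j"
    and indep: "prob_space.indep_vars N (\<lambda>_. borel) Y {1..d}"
    and same_distr: "\<And>i. i \<in> {1..d} \<Longrightarrow> distr N borel (Y i) = distr M borel (X i)"
  shows "measure M {x \<in> space M. (\<Sum>i=1..d. X i x) > 0}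
           \<ge> 1/2 * measure N {y \<in> space N. (\<Sum>i=1..d. Y i y) > 0}"
proof -
  interpret N: prob_space N by (rule assms(2))
  interpret M: prob_space M by (rule assms(1))
  define I where "I = {1..d}"
  define S where "S = (\<Sum>i\<in>I. p i)"
  have low: "measure M {x \<in> space M. (\<Sum>i=1..d. X i x) > 0} \<ge> S / (1 + S)"
    using lower_part[OF assms(1) bern corr] by (simp add: S_def I_def)
  have measY: "Y i \<in> borel_measurable N" if "i \<in> I" for i
    using indep that unfolding N.indep_vars_def2 I_def by auto
  have measX: "X i \<in> borel_measurable M" if "i \<in> I" for i using bern[of i] that by (auto simp: bernoulli_rv_def I_def)
  have pY: "measure N {y\<in>space N. Y i y \<noteq> 0} = p i" if "i \<in> I" for i
  proof -
    have "measure N {y\<in>space N. Y i y \<noteq> 0} = measure (distr N borel (Y i)) (-{0})"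
      using measY[OF that] by (subst measure_distr) (auto intro!: arg_cong[where f="measure N"])
    also have "\<dots> = measure (distr M borel (X i)) (-{0})" using same_distr that by (simp add: I_def)
    also have "\<dots> = measure M {x\<in>space M. X i x \<noteq> 0}"
      using measX[OF that] by (subst measure_distr) (auto intro!: arg_cong[where f="measure M"])
    also have "\<dots> = measure M {x\<in>space M. X i x = 1}"
    proof (rule measure_eq_AE)
      have "AE x in M. X i x \<in> {0, 1}" using bern[of i] that by (auto simp: bernoulli_rv_def I_def)
      then show "AE x in M. (x \<in> {x\<in>space M. X i x \<noteq> 0}) = (x \<in> {x\<in>space M. X i x = 1})"
        by eventually_elim auto
      show "{x\<in>space M. X i x \<noteq> 0} \<in> sets M" using measX[OF that] by measurable
      show "{x\<in>space M. X i x = 1} \<in> sets M" using measX[OF that] by measurable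
    qed
    also have "\<dots> = p i" using bern[of i] that by (auto simp: bernoulli_rv_def I_def)
    finally show ?thesis .
  qed
  have "measure N {y \<in> space N. (\<Sum>i=1..d. Y i y) > 0} \<le> measure N (\<Union>i\<in>I. {y\<in>space N. Y i y \<noteq> 0})"
  proof (rule N.finite_measure_mono)
    show "{y \<in> space N. (\<Sum>i=1..d. Y i y) > 0} \<subseteq> (\<Union>i\<in>I. {y\<in>space N. Y i y \<noteq> 0})"
    proof
      fix y assume "y \<in> {y \<in> space N. (\<Sum>i=1..d. Y i y) > 0}"
      then have "y \<in> space N" "(\<Sum>i\<in>I. Y i y) \<noteq> 0" by (auto simp: I_def)
      then obtain i where "i \<in> I" "Y i y \<noteq> 0" by (meson sum.neutral)
      then show "y \<in> (\<Union>i\<in>I. {y\<in>space N. Y i y \<noteq> 0})" using \<open>y \<in> space N\<close> by auto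
    qed
    show "(\<Union>i\<in>I. {y\<in>space N. Y i y \<noteq> 0}) \<in> sets N"
      using measY by (intro sets.finite_UN) (auto simp: I_def)
  qed
  also have "\<dots> \<le> (\<Sum>i\<in>I. measure N {y\<in>space N. Y i y \<noteq> 0})"
    using measY by (intro measure_UNION_le) (auto simp: I_def)
  also have "\<dots> = S" using pY by (simp add: S_def)
  finally have up1: "measure N {y \<in> space N. (\<Sum>i=1..d. Y i y) > 0} \<le> S" .
  have up2: "measure N {y \<in> space N. (\<Sum>i=1..d. Y i y) > 0} \<le> 1" by (rule N.prob_le_1)
  have S0: "S \<ge> 0" using up1 by (meson measure_nonneg order_trans)
  show ?thesis
  proof (cases "S \<le> 1")
    case True
    have "S / 2 \<le> S / (1 + S)" using True S0 by (intro divide_left_mono) auto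
    then show ?thesis using low up1 by linarith
  next
    case False
    have "1 / 2 \<le> S / (1 + S)" using False by (simp add: field_simps)
    then show ?thesis using low up2 by linarith
  qed
qed

end
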